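(* There exist, for every (sufficiently large) $n$, positive real weights $w_n\ge\dots\ge w_1>0$ and a bound $B\in\{1,\dots,n\}$ such that RLS (defined in the context), started from a uniformly random initial search point in $\{0,1\}^n$ and minimising the penalised fitness \[ f(x)=\sum_{i=1}^n w_i x_i+\max\{0,\,B-b(x)\}\cdot(n w_n+1),\qquad b(x)=\sum_{i=1}^n x_i , \] has expected optimisation time $\Omega(n^2)$.
   Context: Problem: minimise $f_{\mathrm{obj}}(x)=\sum_{i=1}^n w_ix_i$ over $x\in\{0,1\}^n$ subject to the uniform constraint $x_1+\dots+x_n\ge B$. A search point is optimal if it satisfies the constraint and minimises $f_{\mathrm{obj}}$ among all points satisfying the constraint. RLS: maintain a current search point $x_t$ ($x_0$ uniform on $\{0,1\}^n$); in each iteration choose $b\in\{1,2\}$ uniformly at random, create $x'$ by flipping $b$ distinct bits of $x_t$ chosen uniformly at random; set $x_{t+1}=x'$ if $f(x')\le f(x_t)$, otherwise $x_{t+1}=x_t$. The optimisation time is the number of iterations until an optimal search point has been sampled for the first time. *)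

theory Defs
  imports "HOL-Probability.Probability"
begin

text \<open>Search points in {0,1}^n are represented by the set of positions (from {1..n})
  whose bit is 1. Weights are indexed 1..n.\<close>

definition search_space :: "nat \<Rightarrow> nat set set" where
  "search_space n = Pow {1..n}"

definition f_obj :: "(nat \<Rightarrow> real) \<Rightarrow> nat set \<Rightarrow> real" where
  "f_obj w x = (\<Sum>i\<in>x. w i)"

definition f_pen :: "nat \<Rightarrow> (nat \<Rightarrow> real) \<Rightarrow> nat \<Rightarrow> nat set \<Rightarrow> real" where
  "f_pen n w B x = f_obj w x + max 0 (real B - real (card x)) * (real n * w n + 1)"

definition optimal :: "nat \<Rightarrow> (nat \<Rightarrow> real) \<Rightarrow> nat \<Rightarrow> nat set \<Rightarrow> bool" where
  "optimal n w B x \<longleftrightarrow> x \<in> search_space n \<and> card x \<ge> B \<and>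
     (\<forall>y\<in>search_space n. card y \<ge> B \<longrightarrow> f_obj w x \<le> f_obj w y)"

definition rls_step :: "nat \<Rightarrow> (nat set \<Rightarrow> real) \<Rightarrow> nat set \<Rightarrow> nat set pmf" where
  "rls_step n f x = do {
     b \<leftarrow> pmf_of_set {1::nat, 2};
     S \<leftarrow> pmf_of_set {S. S \<subseteq> {1..n} \<and> card S = b};
     let y = x \<union> S - (x \<inter> S);
     return_pmf (if f y \<le> f x then y else x)
   }"

text \<open>Process stopped at the first optimal search point: None means an optimal point
  has already been sampled (at some time \<le> t), Some x means x_t = x and none of
  x_0,...,x_t is optimal.\<close>
definition mark :: "(nat set \<Rightarrow> bool) \<Rightarrow> nat set \<Rightarrow> nat set option" where
  "mark opt x = (if opt x then None else Some x)"

fun rls_stopped :: "nat \<Rightarrow> (nat set \<Rightarrow> real) \<Rightarrow> (nat set \<Rightarrow> bool) \<Rightarrow> nat \<Rightarrow> nat set option pmf" where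
  "rls_stopped n f opt 0 = map_pmf (mark opt) (pmf_of_set (search_space n))"
| "rls_stopped n f opt (Suc t) = rls_stopped n f opt t \<bind>
     (\<lambda>s. case s of None \<Rightarrow> return_pmf None
                  | Some x \<Rightarrow> map_pmf (mark opt) (rls_step n f x))"

text \<open>Expected optimisation time E[T] = sum_{t \<ge> 0} Pr[T > t], where T is the first t
  with x_t optimal (possibly infinite).\<close>
definition rls_expected_time :: "nat \<Rightarrow> (nat set \<Rightarrow> real) \<Rightarrow> (nat set \<Rightarrow> bool) \<Rightarrow> ennreal" where
  "rls_expected_time n f opt =
     (\<Sum>t. ennreal (measure_pmf.prob (rls_stopped n f opt t) (range Some)))"

end

theory Submission
  imports Defs
begin


lemma card_ge1: "finite z \<Longrightarrow> z \<noteq> {} \<Longrightarrow> 1 \<le> card z"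
  by (cases "card z") auto

definition wt :: "nat \<Rightarrow> real" where "wt i = (if i = 1 then 1 else 2)"

definition hh :: "nat \<Rightarrow> nat set \<Rightarrow> real" where
  "hh n x = (if x \<subseteq> {1..n} \<and> 1 \<notin> x \<and> x \<noteq> {} then real ((n - card x)^2) else 0)"

definition resf :: "(nat set \<Rightarrow> real) \<Rightarrow> nat set \<Rightarrow> nat set \<Rightarrow> nat set" where
  "resf f x S = (let y = x \<union> S - (x \<inter> S) in if f y \<le> f x then y else x)"

definition TT :: "nat \<Rightarrow> nat \<Rightarrow> nat set set" where
  "TT n b = {S. S \<subseteq> {1..n} \<and> card S = b}"

lemma fobj_wt:
  assumes "finite z"
  shows "f_obj wt z = 2 * real (card z) - (if 1 \<in> z then 1 else 0)"
proof (cases "1 \<in> z")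
  case True
  have "f_obj wt z = wt 1 + (\<Sum>i\<in>z - {1}. wt i)"
    unfolding f_obj_def using True assms by (simp add: sum.remove)
  also have "(\<Sum>i\<in>z - {1}. wt i) = (\<Sum>i\<in>z - {1}. 2)"
    by (rule sum.cong) (auto simp: wt_def)
  moreover have "card (z - {1}) = card z - 1" using True assms by simp
  moreover have "card z \<ge> 1" using True assms card_ge1 by blast
  ultimately show ?thesis using True assms
    by (simp add: wt_def of_nat_diff)
next
  case False
  have "f_obj wt z = (\<Sum>i\<in>z. 2)"
    unfolding f_obj_def using False by (intro sum.cong) (auto simp: wt_def)
  then show ?thesis using False by simp
qed

lemma FF_eq:
  assumes "n \<ge> 2" "finite z"
  shows "f_pen n wt 1 z = 2 * real (card z) - (if 1 \<in> z then 1 else 0) + (if z = {} then 2 * real n + 1 else 0)"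
proof -
  have wn: "wt n = 2" using assms by (simp add: wt_def)
  have "max 0 (real 1 - real (card z)) = (if z = {} then 1 else 0)"
    using assms card_ge1[of z] by auto
  then show ?thesis unfolding f_pen_def using fobj_wt[OF assms(2)] wn by simp
qed



lemma choose2_real: "real (m choose 2) = real m * (real m - 1) / 2"
proof (induction m)
  case 0 then show ?case by simp
next
  case (Suc m)
  have "(Suc m) choose 2 = (m choose 1) + (m choose 2)"
    using binomial_Suc_Suc[of m 1] by (simp add: numeral_2_eq_2)
  then have "real ((Suc m) choose 2) = real m + real (m choose 2)" by simp
  then show ?case using Suc by (simp add: field_simps)
qed

lemma arith_key:
  fixes n k :: nat
  assumes n2: "n \<ge> 2" and k1: "1 \<le> k" and kn: "k \<le> n"
  shows "real k * real ((n - k)^2) / (real n * (real n - 1))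
           \<le> 1 + real k * (if k \<ge> 2 then 2 * real (n - k) + 1 else 0) / (2 * real n)"
proof (cases "k = 1")
  case True
  have m1: "real n - 1 > 0" using n2 by simp
  have e: "real (n - 1) = real n - 1" using n2 by (simp add: of_nat_diff)
  have "real k * real ((n - k)^2) / (real n * (real n - 1)) = (real n - 1) / real n"
    using True m1 n2 by (simp add: e power2_eq_square field_simps)
  also have "\<dots> \<le> 1" using n2 by simp
  finally show ?thesis using True by simp
next
  case False
  then have k2: "k \<ge> 2" using k1 by simp
  define a where "a = real (n - k)"
  define m where "m = real n"
  have a0: "a \<ge> 0" unfolding a_def by simp
  have am: "a \<le> m - 1" unfolding a_def m_def using k1 kn by (simp add: of_nat_diff)
  have m1: "m - 1 > 0" unfolding m_def using n2 by simp
  have mpos: "m > 0" using m1 by simp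
  have "a * a \<le> a * (m - 1)" by (rule mult_left_mono[OF am a0])
  then have "real k * (a * a) \<le> real k * (a * (m - 1))" by (rule mult_left_mono) simp
  then have "real k * (a * a) / (m * (m - 1)) \<le> real k * (a * (m - 1)) / (m * (m - 1))"
    by (rule divide_right_mono) (use mpos m1 in simp)
  also have "real k * (a * (m - 1)) / (m * (m - 1)) = real k * a / m" using m1 mpos by (simp add: field_simps)
  also have "real k * a / m \<le> 1 + real k * (2 * a + 1) / (2 * m)"
  proof -
    have "real k * a / m = real k * (2 * a) / (2 * m)" by simp
    also have "\<dots> \<le> real k * (2 * a + 1) / (2 * m)"
      by (rule divide_right_mono) (use mpos a0 in \<open>simp_all add: mult_left_mono\<close>)
    finally show ?thesis by simp
  qed
  finally show ?thesis using k2 unfolding a_def m_def by (simp add: power2_eq_square)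
qed

locale setting =
  fixes n :: nat and x :: "nat set"
  assumes n2: "n \<ge> 2" and xsub: "x \<subseteq> {1..n}" and x1: "1 \<notin> x" and xne: "x \<noteq> {}"
begin

abbreviation F where "F \<equiv> f_pen n wt 1"

lemma finx: "finite x" using finite_subset[OF xsub] by simp

lemma cardx: "1 \<le> card x" "card x \<le> n"
  using finx xne card_ge1 apply blast
  using card_mono[OF _ xsub] by simp

lemma Fx: "F x = 2 * real (card x)"
  using FF_eq[OF n2 finx] x1 xne by simp

lemma res_sub: "S \<subseteq> {1..n} \<Longrightarrow> resf F x S \<subseteq> {1..n}"
  using xsub by (auto simp: resf_def Let_def)

lemma res_no1:
  assumes "S \<subseteq> {1..n}" "1 \<notin> resf F x S"
  shows "hh n (resf F x S) \<ge> real ((n - card x)^2)"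
proof -
  define y where "y = x \<union> S - (x \<inter> S)"
  have finy: "finite y" using finite_subset[OF assms(1)] finx unfolding y_def by simp
  show ?thesis
  proof (cases "F y \<le> F x")
    case True
    then have r: "resf F x S = y" by (simp add: resf_def y_def Let_def)
    have y1: "1 \<notin> y" using assms(2) r by simp
    have yne: "y \<noteq> {}"
    proof
      assume "y = {}"
      then have "F y = 2 * real n + 1" using FF_eq[OF n2 finy] by simp
      then show False using True Fx cardx by simp
    qed
    have "F y = 2 * real (card y)" using FF_eq[OF n2 finy] y1 yne by simp
    then have cy: "card y \<le> card x" using True Fx by simp
    have ysub: "y \<subseteq> {1..n}" using res_sub[OF assms(1)] r by simp
    have "(n - card x)^2 \<le> (n - card y)^2"
      by (intro power_mono) (use cy in auto)
    then show ?thesis using r y1 yne ysub by (simp add: hh_def)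
  next
    case False
    then have r: "resf F x S = x" by (simp add: resf_def y_def Let_def)
    then show ?thesis using xsub x1 xne by (simp add: hh_def)
  qed
qed

lemma res_1:
  assumes "S \<subseteq> {1..n}" "1 \<in> resf F x S"
  shows "1 \<in> S \<and> S \<inter> x \<noteq> {}"
proof -
  define y where "y = x \<union> S - (x \<inter> S)"
  have finS: "finite S" using finite_subset[OF assms(1)] by simp
  have finy: "finite y" using assms(1) finx finS unfolding y_def by simp
  have acc: "F y \<le> F x" and r: "resf F x S = y"
    using assms(2) x1 by (auto simp: resf_def y_def Let_def split: if_splits)
  have y1: "1 \<in> y" using assms(2) r by simp
  then have S1: "1 \<in> S" using x1 unfolding y_def by auto
  moreover have "S \<inter> x \<noteq> {}"
  proof
    assume dis: "S \<inter> x = {}"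
    then have "y = x \<union> S" unfolding y_def by auto
    then have "card y = card x + card S" using dis finx finS
      by (simp add: card_Un_disjoint inf_commute)
    moreover have "card S \<ge> 1" using S1 finS card_ge1 by blast
    moreover have "F y = 2 * real (card y) - 1" using FF_eq[OF n2 finy] y1 by auto
    ultimately show False using acc Fx by simp
  qed
  ultimately show ?thesis by simp
qed

lemma res_rm:
  assumes "j \<in> x" "card x \<ge> 2"
  shows "resf F x {j} = x - {j}"
proof -
  have e: "x \<union> {j} - (x \<inter> {j}) = x - {j}" using assms by auto
  have finy: "finite (x - {j})" using finx by simp
  have ne: "x - {j} \<noteq> {}"
  proof
    assume "x - {j} = {}"
    then have "x \<subseteq> {j}" by auto
    then have "card x \<le> 1" using card_mono[of "{j}" x] by simp
    then show False using assms by simp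
  qed
  have "F (x - {j}) = 2 * real (card (x - {j}))" using FF_eq[OF n2 finy] x1 ne by simp
  also have "card (x - {j}) = card x - 1" using assms finx by simp
  finally have "F (x - {j}) \<le> F x" using Fx assms by (simp add: of_nat_diff)
  then show ?thesis unfolding resf_def Let_def e by simp
qed

lemma TT_fin: "finite (TT n b)"
  unfolding TT_def by (rule finite_subset[of _ "Pow {1..n}"]) auto

lemma TT_card: "card (TT n b) = n choose b"
  unfolding TT_def using n_subsets[of "{1..n}" b] by simp

lemma TT_ne: "b \<in> {1,2} \<Longrightarrow> TT n b \<noteq> {}"
proof -
  assume b: "b \<in> {1,2}"
  have "{1..b} \<in> TT n b" using b n2 unfolding TT_def by auto
  then show ?thesis by auto
qed

lemma TT1: "TT n 1 = (\<lambda>j. {j}) ` {1..n}"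
  unfolding TT_def by (auto simp: card_1_singleton_iff)

lemma step_eq: "rls_step n F x = map_pmf (resf F x) (pmf_of_set {1,2} \<bind> (\<lambda>b. pmf_of_set (TT n b)))"
  unfolding rls_step_def resf_def TT_def map_pmf_def by (simp add: bind_assoc_pmf bind_return_pmf Let_def)

lemma expect_split:
  "measure_pmf.expectation (rls_step n F x) (hh n) =
     ((\<Sum>S\<in>TT n 1. hh n (resf F x S)) / real n + (\<Sum>S\<in>TT n 2. hh n (resf F x S)) / real (n choose 2)) / 2"
proof -
  have "measure_pmf.expectation (rls_step n F x) (hh n) =
        measure_pmf.expectation (pmf_of_set {1,2} \<bind> (\<lambda>b. pmf_of_set (TT n b))) (\<lambda>S. hh n (resf F x S))"
    unfolding step_eq by simp
  also have "\<dots> = (\<Sum>b\<in>{1,2}. measure_pmf.expectation (pmf_of_set (TT n b)) (\<lambda>S. hh n (resf F x S)) /\<^sub>R real (card {1::nat,2}))"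
    by (rule pmf_expectation_bind_pmf_of_set) (auto simp: TT_fin TT_ne)
  also have "\<dots> = (\<Sum>b\<in>{1::nat,2}. ((\<Sum>S\<in>TT n b. hh n (resf F x S)) / real (n choose b)) / 2)"
    by (intro sum.cong refl) (simp add: integral_pmf_of_set TT_fin TT_ne TT_card)
  also have "\<dots> = ((\<Sum>S\<in>TT n 1. hh n (resf F x S)) / real n + (\<Sum>S\<in>TT n 2. hh n (resf F x S)) / real (n choose 2)) / 2"
    by (simp add: add_divide_distrib)
  finally show ?thesis .
qed

lemma hh_nonneg: "hh m z \<ge> 0" by (simp add: hh_def)

lemma sum1_bound:
  "(\<Sum>S\<in>TT n 1. hh n (resf F x S)) \<ge>
     real n * real ((n - card x)^2) + real (card x) * (if card x \<ge> 2 then 2 * real (n - card x) + 1 else 0)"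
proof -
  define G where "G = real ((n - card x)^2)"
  define D where "D = (if card x \<ge> 2 then 2 * real (n - card x) + 1 else 0)"
  have e1: "(\<Sum>S\<in>TT n 1. hh n (resf F x S)) = (\<Sum>j\<in>{1..n}. hh n (resf F x {j}))"
    unfolding TT1 by (simp add: sum.reindex inj_on_def)
  have pw: "hh n (resf F x {j}) \<ge> G + (if j \<in> x then D else 0)" if j: "j \<in> {1..n}" for j
  proof (cases "j \<in> x \<and> card x \<ge> 2")
    case True
    have r: "resf F x {j} = x - {j}" using res_rm True by simp
    have c: "card (x - {j}) = card x - 1" using True finx by simp
    have cpos: "card (x - {j}) > 0" using c True by simp
    have ne: "x - {j} \<noteq> {}"
    proof
      assume "x - {j} = {}"
      then show False using cpos by (metis card.empty less_irrefl)
    qed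
    have "hh n (x - {j}) = real ((n - (card x - 1))^2)"
      using ne xsub x1 c unfolding hh_def by (simp add: subset_iff)
    also have "n - (card x - 1) = (n - card x) + 1" using cardx by simp
    also have "real (((n - card x) + 1)^2) = real ((n - card x)^2) + 2 * real (n - card x) + 1"
      by (simp add: power2_eq_square algebra_simps)
    finally show ?thesis using r True by (simp add: G_def D_def)
  next
    case False
    have n1: "1 \<notin> resf F x {j}"
    proof
      assume "1 \<in> resf F x {j}"
      then have "1 \<in> {j} \<and> {j} \<inter> x \<noteq> {}" using res_1[of "{j}"] j by simp
      then show False using x1 by auto
    qed
    have "hh n (resf F x {j}) \<ge> G" using res_no1[of "{j}"] n1 j by (simp add: G_def)
    moreover have "(if j \<in> x then D else 0) = 0" using False by (simp add: D_def)
    ultimately show ?thesis by simp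
  qed
  have "(\<Sum>j\<in>{1..n}. G + (if j \<in> x then D else 0)) \<le> (\<Sum>j\<in>{1..n}. hh n (resf F x {j}))"
    by (rule sum_mono) (use pw in auto)
  moreover have "(\<Sum>j\<in>{1..n}. (if j \<in> x then D else 0)) = (\<Sum>j\<in>x. D)"
  proof -
    have "(\<Sum>j\<in>{1..n}. (if j \<in> x then D else 0)) = (\<Sum>j\<in>{1..n} \<inter> x. D)"
      by (simp add: sum.If_cases)
    also have "{1..n} \<inter> x = x" using xsub by blast
    finally show ?thesis .
  qed
  ultimately have "real n * G + real (card x) * D \<le> (\<Sum>j\<in>{1..n}. hh n (resf F x {j}))"
    by (simp add: sum.distrib)
  then show ?thesis using e1 by (simp add: G_def D_def)
qed

lemma sum2_bound:
  "(\<Sum>S\<in>TT n 2. hh n (resf F x S)) \<ge>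
     real (n choose 2) * real ((n - card x)^2) - real (card x) * real ((n - card x)^2)"
proof -
  define G where "G = real ((n - card x)^2)"
  define E where "E = (\<lambda>j. {1,j}) ` x"
  have pw: "hh n (resf F x S) \<ge> G - (if S \<in> E then G else 0)" if S: "S \<in> TT n 2" for S
  proof (cases "S \<in> E")
    case True
    then show ?thesis using hh_nonneg by simp
  next
    case False
    have Ssub: "S \<subseteq> {1..n}" and cS: "card S = 2" using S by (auto simp: TT_def)
    have finS: "finite S" using finite_subset[OF Ssub] by simp
    have n1: "1 \<notin> resf F x S"
    proof
      assume "1 \<in> resf F x S"
      then have h: "1 \<in> S \<and> S \<inter> x \<noteq> {}" using res_1[OF Ssub] by simp
      then obtain j where j: "j \<in> S" "j \<in> x" by blast
      have j1: "j \<noteq> 1" using j x1 by auto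
      have sub: "{1, j} \<subseteq> S" using h j by simp
      have "card {1, j} = 2" using j1 by simp
      then have "{1, j} = S" using card_seteq[OF finS sub] cS by simp
      then have "S \<in> E" unfolding E_def using j by blast
      then show False using False by simp
    qed
    have "hh n (resf F x S) \<ge> G" using res_no1[OF Ssub] n1 by (simp add: G_def)
    then show ?thesis using False by simp
  qed
  have Esub: "E \<subseteq> TT n 2"
  proof
    fix S assume "S \<in> E"
    then obtain j where j: "j \<in> x" "S = {1, j}" unfolding E_def by blast
    have "j \<noteq> 1" using j x1 by auto
    moreover have "j \<in> {1..n}" using j xsub by blast
    ultimately show "S \<in> TT n 2" using j n2 by (auto simp: TT_def)
  qed
  have inj: "inj_on (\<lambda>j. {1::nat, j}) x"
  proof (rule inj_onI)
    fix a b assume ab: "a \<in> x" "b \<in> x" "{1::nat, a} = {1, b}"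
    then have "a \<noteq> 1" "b \<noteq> 1" using x1 by auto
    then show "a = b" using ab(3) by (auto simp: doubleton_eq_iff)
  qed
  have cE: "card E = card x" unfolding E_def using card_image[OF inj] .
  have "(\<Sum>S\<in>TT n 2. G - (if S \<in> E then G else 0)) \<le> (\<Sum>S\<in>TT n 2. hh n (resf F x S))"
    by (rule sum_mono) (use pw in auto)
  moreover have "(\<Sum>S\<in>TT n 2. (if S \<in> E then G else 0)) = (\<Sum>S\<in>E. G)"
  proof -
    have "(\<Sum>S\<in>TT n 2. (if S \<in> E then G else 0)) = (\<Sum>S\<in>TT n 2 \<inter> E. G)"
      by (simp add: sum.If_cases TT_fin)
    also have "TT n 2 \<inter> E = E" using Esub by blast
    finally show ?thesis .
  qed
  ultimately have "real (card (TT n 2)) * G - real (card x) * G \<le> (\<Sum>S\<in>TT n 2. hh n (resf F x S))"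
    by (simp add: sum_subtractf cE)
  then show ?thesis by (simp add: TT_card G_def)
qed

lemma step_drift: "measure_pmf.expectation (rls_step n F x) (hh n) \<ge> hh n x - 1"
proof -
  define k where "k = card x"
  define G where "G = real ((n - k)^2)"
  define D where "D = (if k \<ge> 2 then 2 * real (n - k) + 1 else 0)"
  define m where "m = real n"
  define C where "C = real (n choose 2)"
  define S1 where "S1 = (\<Sum>S\<in>TT n 1. hh n (resf F x S))"
  define S2 where "S2 = (\<Sum>S\<in>TT n 2. hh n (resf F x S))"
  have hx: "hh n x = G" using xsub x1 xne by (simp add: hh_def G_def k_def)
  have mpos: "m > 0" using n2 by (simp add: m_def)
  have m1: "m - 1 > 0" using n2 by (simp add: m_def)
  have Ceq: "C = m * (m - 1) / 2" by (simp add: C_def m_def choose2_real)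
  have Cpos: "C > 0" unfolding Ceq using mpos m1 by simp
  have b1: "S1 \<ge> m * G + real k * D" unfolding S1_def G_def D_def k_def m_def by (rule sum1_bound)
  have b2: "S2 \<ge> C * G - real k * G" unfolding S2_def G_def C_def k_def by (rule sum2_bound)
  have s1: "S1 / m \<ge> G + real k * D / m"
  proof -
    have "(m * G + real k * D) / m \<le> S1 / m" by (rule divide_right_mono[OF b1]) (use mpos in simp)
    moreover have "(m * G + real k * D) / m = G + real k * D / m" using mpos by (simp add: field_simps)
    ultimately show ?thesis by simp
  qed
  have s2: "S2 / C \<ge> G - real k * G / C"
  proof -
    have "(C * G - real k * G) / C \<le> S2 / C" by (rule divide_right_mono[OF b2]) (use Cpos in simp)
    moreover have "(C * G - real k * G) / C = G - real k * G / C" using Cpos by (simp add: field_simps)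
    ultimately show ?thesis by simp
  qed
  have key: "real k * G / (m * (m - 1)) \<le> 1 + real k * D / (2 * m)"
    using arith_key[OF n2, of k] cardx unfolding G_def D_def m_def k_def by simp
  have kG: "real k * G / C / 2 = real k * G / (m * (m - 1))" using Ceq by simp
  have kD: "real k * D / m / 2 = real k * D / (2 * m)" by simp
  have "measure_pmf.expectation (rls_step n F x) (hh n) = (S1 / m + S2 / C) / 2"
    unfolding expect_split S1_def S2_def m_def C_def ..
  also have "\<dots> \<ge> (G + real k * D / m + (G - real k * G / C)) / 2" using divide_right_mono[OF add_mono[OF s1 s2], of 2] by simp
  finally have "measure_pmf.expectation (rls_step n F x) (hh n) \<ge> (G + real k * D / m + (G - real k * G / C)) / 2" .
  moreover define A where "A = real k * D / m"
  moreover define Bv where "Bv = real k * G / C"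
  ultimately have E: "measure_pmf.expectation (rls_step n F x) (hh n) \<ge> (G + A + (G - Bv)) / 2" by simp
  have e1: "Bv / 2 = real k * G / (m * (m - 1))" using kG unfolding Bv_def by simp
  have e2: "A / 2 = real k * D / (2 * m)" using kD unfolding A_def by simp
  have "Bv / 2 \<le> 1 + A / 2" unfolding e1 e2 by (rule key)
  then have "G - 1 \<le> (G + A + (G - Bv)) / 2" by (simp add: field_simps)
  then show ?thesis unfolding hx using order_trans[OF _ E] by blast
qed

end


lemma hh_le: "hh n z \<le> real n ^ 2"
proof -
  have "(n - card z)^2 \<le> n^2" by (intro power_mono) auto
  then have "real ((n - card z)^2) \<le> real (n^2)" by (simp only: of_nat_le_iff)
  then show ?thesis by (simp add: hh_def)
qed

lemma hh_opt:
  assumes n1: "n \<ge> 1" and opt: "optimal n wt 1 x"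
  shows "hh n x = 0"
proof (rule ccontr)
  assume "hh n x \<noteq> 0"
  then have xsub: "x \<subseteq> {1..n}" and x1: "1 \<notin> x" and xne: "x \<noteq> {}" by (auto simp: hh_def split: if_splits)
  have finx: "finite x" using finite_subset[OF xsub] by simp
  obtain j where j: "j \<in> x" using xne by blast
  define y where "y = insert 1 (x - {j})"
  have j1: "j \<noteq> 1" using j x1 by auto
  have finy: "finite y" using finx by (simp add: y_def)
  have cx1: "card x \<ge> 1" using card_ge1[OF finx xne] .
  have cy: "card y = card x" using j x1 finx cx1 by (simp add: y_def card_insert_if)
  have ysp: "y \<in> search_space n" using xsub n1 by (auto simp: y_def search_space_def)
  have "card y \<ge> 1" using cy cx1 by simp
  then have "f_obj wt x \<le> f_obj wt y" using opt ysp by (simp add: optimal_def)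
  moreover have "f_obj wt y = 2 * real (card y) - 1" using fobj_wt[OF finy] by (simp add: y_def)
  moreover have "f_obj wt x = 2 * real (card x)" using fobj_wt[OF finx] x1 by simp
  ultimately show False using cy by simp
qed

lemma drift_all:
  assumes n2: "n \<ge> 2"
  shows "ennreal (hh n x) \<le> (\<integral>\<^sup>+ y. ennreal (hh n y) \<partial>rls_step n (f_pen n wt 1) x) + 1"
proof (cases "hh n x = 0")
  case True
  then show ?thesis by simp
next
  case False
  then have "x \<subseteq> {1..n}" "1 \<notin> x" "x \<noteq> {}" by (auto simp: hh_def split: if_splits)
  then interpret setting n x using n2 by unfold_locales
  define M where "M = measure_pmf (rls_step n (f_pen n wt 1) x)"
  have int: "integrable M (hh n)"
    unfolding M_def by (rule measure_pmf.integrable_const_bound[where B = "real n ^ 2"]) (auto simp: hh_le hh_nonneg)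
  have eq: "(\<integral>\<^sup>+ y. ennreal (hh n y) \<partial>M) = ennreal (integral\<^sup>L M (hh n))"
    by (rule nn_integral_eq_integral[OF int]) (simp add: hh_nonneg)
  have nn: "integral\<^sup>L M (hh n) \<ge> 0" by (simp add: hh_nonneg)
  have "hh n x \<le> integral\<^sup>L M (hh n) + 1" using step_drift unfolding M_def by simp
  then have "ennreal (hh n x) \<le> ennreal (integral\<^sup>L M (hh n) + 1)" by (rule ennreal_leI)
  also have "\<dots> = ennreal (integral\<^sup>L M (hh n)) + 1" using nn by simp
  finally show ?thesis using eq unfolding M_def by simp
qed


definition VV :: "nat \<Rightarrow> nat set option \<Rightarrow> ennreal" where
  "VV n s = (case s of None \<Rightarrow> 0 | Some x \<Rightarrow> ennreal (hh n x))"

definition PP :: "nat \<Rightarrow> nat \<Rightarrow> nat set option pmf" where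
  "PP n t = rls_stopped n (f_pen n wt 1) (optimal n wt 1) t"

definition Phi :: "nat \<Rightarrow> nat \<Rightarrow> ennreal" where
  "Phi n t = (\<integral>\<^sup>+ s. VV n s \<partial>PP n t)"

definition qq :: "nat \<Rightarrow> nat \<Rightarrow> ennreal" where
  "qq n t = emeasure (measure_pmf (PP n t)) (range Some)"

lemma VV_mark: "n \<ge> 1 \<Longrightarrow> VV n (mark (optimal n wt 1) y) = ennreal (hh n y)"
  using hh_opt[of n y] by (auto simp: VV_def mark_def)

lemma qq_int: "qq n t = (\<integral>\<^sup>+ s. indicator (range Some) s \<partial>PP n t)"
  unfolding qq_def by (simp add: nn_integral_indicator)

definition KK :: "nat \<Rightarrow> nat set option \<Rightarrow> nat set option pmf" where
  "KK n = (\<lambda>s. case s of None \<Rightarrow> return_pmf None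
                  | Some x \<Rightarrow> map_pmf (mark (optimal n wt 1)) (rls_step n (f_pen n wt 1) x))"

lemma PP_Suc: "PP n (Suc t) = PP n t \<bind> KK n"
  unfolding PP_def KK_def by (simp only: rls_stopped.simps)

lemma hh_nonneg_g: "hh m z \<ge> 0" by (simp add: hh_def)

lemma Phi_step:
  assumes n2: "n \<ge> 2"
  shows "Phi n t \<le> Phi n (Suc t) + qq n t"
proof -
  define K where "K = KK n"
  have pw: "VV n s \<le> (\<integral>\<^sup>+ y. VV n y \<partial>K s) + indicator (range Some) s" for s
  proof (cases s)
    case None
    then show ?thesis by (simp add: VV_def)
  next
    case (Some x)
    have "(\<integral>\<^sup>+ y. VV n y \<partial>K s) = (\<integral>\<^sup>+ y. VV n (mark (optimal n wt 1) y) \<partial>rls_step n (f_pen n wt 1) x)"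
      using Some by (simp add: K_def KK_def)
    also have "\<dots> = (\<integral>\<^sup>+ y. ennreal (hh n y) \<partial>rls_step n (f_pen n wt 1) x)"
      using VV_mark[of n] n2 by simp
    finally show ?thesis using Some drift_all[OF n2, of x] by (simp add: VV_def)
  qed
  have "Phi n t \<le> (\<integral>\<^sup>+ s. (\<integral>\<^sup>+ y. VV n y \<partial>K s) + indicator (range Some) s \<partial>PP n t)"
    unfolding Phi_def by (rule nn_integral_mono) (rule pw)
  also have "\<dots> = (\<integral>\<^sup>+ s. (\<integral>\<^sup>+ y. VV n y \<partial>K s) \<partial>PP n t) + (\<integral>\<^sup>+ s. indicator (range Some) s \<partial>PP n t)"
    by (rule nn_integral_add) auto
  also have "(\<integral>\<^sup>+ s. (\<integral>\<^sup>+ y. VV n y \<partial>K s) \<partial>PP n t) = Phi n (Suc t)"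
    unfolding Phi_def PP_Suc K_def by (rule nn_integral_bind_pmf[symmetric])
  finally show ?thesis using qq_int by simp
qed

lemma qq_mono: "qq n (Suc t) \<le> qq n t"
proof -
  define K where "K = KK n"
  have "qq n (Suc t) = (\<integral>\<^sup>+ s. emeasure (measure_pmf (K s)) (range Some) \<partial>PP n t)"
    unfolding qq_def PP_Suc K_def by (rule emeasure_bind_pmf)
  also have "\<dots> \<le> (\<integral>\<^sup>+ s. indicator (range Some) s \<partial>PP n t)"
  proof (rule nn_integral_mono)
    fix s
    show "emeasure (measure_pmf (K s)) (range Some) \<le> indicator (range Some) s"
    proof (cases s)
      case None
      then show ?thesis by (simp add: K_def KK_def)
    next
      case (Some x)
      then show ?thesis by (simp add: measure_pmf.emeasure_le_1)
    qed
  qed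
  finally show ?thesis using qq_int by simp
qed

lemma Phi_le: "Phi n t \<le> of_nat (n^2) * qq n t"
proof -
  have "Phi n t \<le> (\<integral>\<^sup>+ s. of_nat (n^2) * indicator (range Some) s \<partial>PP n t)"
    unfolding Phi_def
  proof (rule nn_integral_mono)
    fix s
    show "VV n s \<le> of_nat (n^2) * indicator (range Some) s"
    proof (cases s)
      case None
      then show ?thesis by (simp add: VV_def)
    next
      case (Some x)
      have "ennreal (hh n x) \<le> ennreal (real (n ^ 2))" unfolding of_nat_power by (rule ennreal_leI) (rule hh_le)
      then show ?thesis using Some by (simp add: VV_def ennreal_of_nat_eq_real_of_nat)
    qed
  qed
  also have "\<dots> = of_nat (n^2) * qq n t"
    unfolding qq_int by (rule nn_integral_cmult) simp
  finally show ?thesis .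
qed

lemma Phi_sum: "n \<ge> 2 \<Longrightarrow> Phi n 0 \<le> Phi n N + (\<Sum>t<N. qq n t)"
proof (induction N)
  case 0 then show ?case by simp
next
  case (Suc N)
  have "Phi n 0 \<le> Phi n N + (\<Sum>t<N. qq n t)" using Suc by simp
  also have "\<dots> \<le> (Phi n (Suc N) + qq n N) + (\<Sum>t<N. qq n t)"
    by (rule add_right_mono) (rule Phi_step[OF Suc.prems])
  also have "\<dots> = Phi n (Suc N) + (\<Sum>t<Suc N. qq n t)" by (simp add: algebra_simps)
  finally show ?case .
qed

lemma Phi_0: "n \<ge> 1 \<Longrightarrow> Phi n 0 = ennreal ((\<Sum>x\<in>Pow {1..n}. hh n x) / 2 ^ n)"
proof -
  assume n1: "n \<ge> 1"
  have "Phi n 0 = (\<integral>\<^sup>+ x. VV n (mark (optimal n wt 1) x) \<partial>pmf_of_set (Pow {1..n}))"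
    unfolding Phi_def PP_def by (simp add: search_space_def)
  also have "\<dots> = (\<integral>\<^sup>+ x. ennreal (hh n x) \<partial>pmf_of_set (Pow {1..n}))"
    using VV_mark[OF n1] by simp
  also have "\<dots> = (\<Sum>x\<in>Pow {1..n}. ennreal (hh n x)) / of_nat (card (Pow {1..n}))"
    by (rule nn_integral_pmf_of_set) auto
  also have "\<dots> = ennreal (\<Sum>x\<in>Pow {1..n}. hh n x) / ennreal (2 ^ n)"
  proof -
    have p: "ennreal (2 ^ n) = 2 ^ n" using ennreal_power[of 2 n] by simp
    show ?thesis by (simp add: hh_nonneg_g card_Pow p)
  qed
  also have "\<dots> = ennreal ((\<Sum>x\<in>Pow {1..n}. hh n x) / 2 ^ n)"
    by (rule divide_ennreal) (auto simp: hh_nonneg_g sum_nonneg)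
  finally show ?thesis .
qed


lemma sum_hh:
  assumes n4: "n \<ge> 4"
  shows "(\<Sum>x\<in>Pow {1..n}. hh n x) \<ge> 2 ^ n * real n ^ 2 / 16"
proof -
  define A where "A = {2..n}"
  define r where "r = (\<lambda>x::nat set. real ((n - card x)^2))"
  have finA: "finite A" by (simp add: A_def)
  have cA: "card A = n - 1" by (simp add: A_def)
  have s1: "(\<Sum>x\<in>Pow {1..n}. hh n x) = (\<Sum>x\<in>Pow A. hh n x)"
  proof (rule sum.mono_neutral_right)
    show "finite (Pow {1..n})" by simp
    show "Pow A \<subseteq> Pow {1..n}" by (auto simp: A_def)
    show "\<forall>i\<in>Pow {1..n} - Pow A. hh n i = 0"
    proof
      fix i assume i: "i \<in> Pow {1..n} - Pow A"
      then have "1 \<in> i"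
      proof -
        from i obtain y where y: "y \<in> i" "y \<notin> A" by blast
        have "y \<in> {1..n}" using i y by blast
        then have "y = 1" using y by (auto simp: A_def)
        then show ?thesis using \<open>y \<in> i\<close> by simp
      qed
      then show "hh n i = 0" by (simp add: hh_def)
    qed
  qed
  have s2: "(\<Sum>x\<in>Pow A. hh n x) = (\<Sum>x\<in>Pow A. r x) - real n ^ 2"
  proof -
    have "(\<Sum>x\<in>Pow A. hh n x) = (\<Sum>x\<in>Pow A. r x - (if x = {} then real n ^ 2 else 0))"
    proof (rule sum.cong[OF refl])
      fix x assume x: "x \<in> Pow A"
      then have "x \<subseteq> {1..n}" "1 \<notin> x" by (auto simp: A_def)
      then show "hh n x = r x - (if x = {} then real n ^ 2 else 0)"
        by (auto simp: hh_def r_def)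
    qed
    also have "\<dots> = (\<Sum>x\<in>Pow A. r x) - (\<Sum>x\<in>Pow A. (if x = {} then real n ^ 2 else 0))"
      by (rule sum_subtractf)
    also have "(\<Sum>x\<in>Pow A. (if x = {} then real n ^ 2 else 0)) = real n ^ 2"
      using finA by (simp add: sum.delta)
    finally show ?thesis .
  qed
  have bij: "bij_betw (\<lambda>x. A - x) (Pow A) (Pow A)"
    by (rule bij_betwI[where g = "\<lambda>x. A - x"]) auto
  have s3: "(\<Sum>x\<in>Pow A. r (A - x)) = (\<Sum>x\<in>Pow A. r x)"
    by (rule sum.reindex_bij_betw[OF bij])
  have rc: "r (A - x) = real ((card x + 1)^2)" if x: "x \<in> Pow A" for x
  proof -
    have xs: "x \<subseteq> A" using x by simp
    have cx: "card x \<le> n - 1" using card_mono[OF finA xs] cA by simp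
    have "card (A - x) = n - 1 - card x" using card_Diff_subset[OF finite_subset[OF xs finA] xs] cA by simp
    then have "n - card (A - x) = card x + 1" using cx n4 by simp
    then show ?thesis by (simp add: r_def)
  qed
  have pw: "r x + r (A - x) \<ge> (real n + 1)^2 / 2" if x: "x \<in> Pow A" for x
  proof -
    have cx: "card x \<le> n" using card_mono[OF finA, of x] x cA by simp
    define a where "a = real (n - card x)"
    define b where "b = real (card x + 1)"
    have ab: "a + b = real n + 1" using cx by (simp add: a_def b_def of_nat_diff)
    have "r x + r (A - x) = a^2 + b^2" using rc[OF x] by (simp add: r_def a_def b_def)
    moreover have "(a + b)^2 / 2 \<le> a^2 + b^2"
    proof -
      have "0 \<le> (a - b)^2" by simp
      then show ?thesis by (simp add: power2_eq_square algebra_simps)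
    qed
    ultimately show ?thesis using ab by simp
  qed
  have cP: "card (Pow A) = 2 ^ (n - 1)" using card_Pow[OF finA] cA by simp
  have "(\<Sum>x\<in>Pow A. (real n + 1)^2 / 2) \<le> (\<Sum>x\<in>Pow A. r x + r (A - x))"
    by (rule sum_mono) (rule pw)
  also have "\<dots> = 2 * (\<Sum>x\<in>Pow A. r x)" using s3 by (simp add: sum.distrib)
  finally have "real (2 ^ (n - 1)) * ((real n + 1)^2 / 2) \<le> 2 * (\<Sum>x\<in>Pow A. r x)"
    using cP by simp
  then have sr: "(\<Sum>x\<in>Pow A. r x) \<ge> 2 ^ (n - 1) * (real n + 1)^2 / 4" by simp
  define P where "P = (2::real) ^ (n - 1)"
  have P8: "P \<ge> 8"
  proof -
    have "(2::real) ^ 3 \<le> 2 ^ (n - 1)" by (rule power_increasing) (use n4 in auto)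
    then show ?thesis by (simp add: P_def)
  qed
  have P2: "(2::real) ^ n = 2 * P"
  proof -
    obtain k where k: "n = Suc k" using n4 by (cases n) auto
    show ?thesis unfolding P_def k by simp
  qed
  define N2 where "N2 = real n ^ 2"
  have N0: "N2 \<ge> 0" by (simp add: N2_def)
  have np: "(real n + 1)^2 \<ge> N2" unfolding N2_def by (rule power_mono) auto
  have "P * N2 \<le> P * (real n + 1)^2" by (rule mult_left_mono[OF np]) (use P8 in simp)
  moreover have "8 * N2 \<le> P * N2" by (rule mult_right_mono[OF P8 N0])
  moreover have "(\<Sum>x\<in>Pow {1..n}. hh n x) \<ge> P * (real n + 1)^2 / 4 - N2"
    using s1 s2 sr by (simp add: P_def N2_def)
  ultimately have L: "(\<Sum>x\<in>Pow {1..n}. hh n x) \<ge> P * N2 / 8" by linarith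
  have eq: "(2::real) ^ n * real n ^ 2 / 16 = P * N2 / 8" unfolding P2 N2_def by simp
  show ?thesis unfolding eq by (rule L)
qed

theorem theorem4:
  "\<exists>c::real. c > 0 \<and> (\<exists>N::nat. \<forall>n\<ge>N.
     \<exists>(w::nat \<Rightarrow> real) (B::nat).
       0 < w 1 \<and> (\<forall>i\<in>{1..<n}. w i \<le> w (Suc i)) \<and> B \<in> {1..n} \<and>
       rls_expected_time n (f_pen n w B) (optimal n w B) \<ge> ennreal (c * real n ^ 2))"
proof -
  have main: "ennreal (1/32 * real n ^ 2) \<le> rls_expected_time n (f_pen n wt 1) (optimal n wt 1)"
    if n4: "4 \<le> n" for n :: nat
  proof -
  have n2: "n \<ge> 2" and n1: "n \<ge> 1" using n4 by simp_all
  define M where "M = n ^ 2"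
  have E: "rls_expected_time n (f_pen n wt 1) (optimal n wt 1) = (\<Sum>t. qq n t)"
    unfolding rls_expected_time_def qq_def PP_def by (simp add: measure_pmf.emeasure_eq_measure)
  have a: "ennreal (real n ^ 2 / 16) \<le> Phi n 0"
  proof -
    have "real n ^ 2 / 16 \<le> (\<Sum>x\<in>Pow {1..n}. hh n x) / 2 ^ n"
      using sum_hh[OF n4] by (simp add: field_simps)
    then show ?thesis unfolding Phi_0[OF n1] by (rule ennreal_leI)
  qed
  have b: "Phi n 0 \<le> Phi n M + (\<Sum>t<M. qq n t)" by (rule Phi_sum[OF n2])
  have c: "Phi n M \<le> (\<Sum>t<M. qq n t)"
  proof -
    have "Phi n M \<le> of_nat M * qq n M" unfolding M_def by (rule Phi_le)
    also have "\<dots> = (\<Sum>t<M. qq n M)" by simp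
    also have "\<dots> \<le> (\<Sum>t<M. qq n t)"
    proof (rule sum_mono)
      fix t assume "t \<in> {..<M}"
      then have "t \<le> M" by simp
      then show "qq n M \<le> qq n t" by (rule lift_Suc_antimono_le[of "qq n", OF qq_mono])
    qed
    finally show ?thesis .
  qed
  have d: "(\<Sum>t<M. qq n t) \<le> (\<Sum>t. qq n t)"
    by (rule sum_le_suminf) (auto intro: summableI)
  have "ennreal (real n ^ 2 / 16) \<le> 2 * (\<Sum>t. qq n t)"
  proof -
    have "ennreal (real n ^ 2 / 16) \<le> (\<Sum>t<M. qq n t) + (\<Sum>t<M. qq n t)"
      using order_trans[OF a order_trans[OF b add_right_mono[OF c]]] .
    also have "\<dots> \<le> (\<Sum>t. qq n t) + (\<Sum>t. qq n t)" using d by (intro add_mono) auto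
    finally show ?thesis by (simp add: mult_2)
  qed
  moreover have "ennreal (real n ^ 2 / 16) = 2 * ennreal (1/32 * real n ^ 2)"
  proof -
    have "ennreal (real n ^ 2 / 16) = ennreal (2 * (1/32 * real n ^ 2))" by simp
    also have "\<dots> = ennreal 2 * ennreal (1/32 * real n ^ 2)" by (rule ennreal_mult) auto
    finally show ?thesis by simp
  qed
  ultimately have "2 * ennreal (1/32 * real n ^ 2) \<le> 2 * (\<Sum>t. qq n t)" by simp
  then have "ennreal (1/32 * real n ^ 2) \<le> (\<Sum>t. qq n t)"
    by (subst (asm) ennreal_mult_le_mult_iff) auto
  then show ?thesis using E by simp
  qed
  show ?thesis
  proof (rule exI[of _ "1/32"], intro conjI)
    show "(1/32::real) > 0" by simp
    show "\<exists>N::nat. \<forall>n\<ge>N. \<exists>(w::nat \<Rightarrow> real) (B::nat).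
       0 < w 1 \<and> (\<forall>i\<in>{1..<n}. w i \<le> w (Suc i)) \<and> B \<in> {1..n} \<and>
       rls_expected_time n (f_pen n w B) (optimal n w B) \<ge> ennreal (1/32 * real n ^ 2)"
    proof (rule exI[of _ 4], intro allI impI)
      fix n :: nat assume n4: "4 \<le> n"
      have w1: "0 < wt 1" by (simp add: wt_def)
      have w2: "\<forall>i\<in>{1..<n}. wt i \<le> wt (Suc i)" by (auto simp: wt_def)
      have b1: "(1::nat) \<in> {1..n}" using n4 by simp
      show "\<exists>(w::nat \<Rightarrow> real) (B::nat).
       0 < w 1 \<and> (\<forall>i\<in>{1..<n}. w i \<le> w (Suc i)) \<and> B \<in> {1..n} \<and>
       rls_expected_time n (f_pen n w B) (optimal n w B) \<ge> ennreal (1/32 * real n ^ 2)"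
        using w1 w2 b1 main[OF n4] by blast
    qed
  qed
qed

end
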